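(* For every positive integer $k$ there exist $d_k > 0$ and $n_0$ such that for every $n\ge n_0$ the following holds. If $G$ is a $k$-partite $k$-graph with vertex classes $V_1, \dots, V_k$ each of $n$ vertices in which every vertex lies in at least $(1-d_k)n^{k-1}$ edges of $G$, then $G$ contains a perfect matching.
   Context: A $k$-partite $k$-graph with vertex classes $V_1,\dots,V_k$ is a set of $k$-element subsets (edges) of $V_1\cup\dots\cup V_k$ each containing exactly one vertex of each $V_i$. A perfect matching is a set of pairwise disjoint edges covering every vertex. *)

theory Defs
  imports Complex_Main
begin

definition kpartite_kgraph :: "nat \<Rightarrow> (nat \<Rightarrow> 'a set) \<Rightarrow> 'a set set \<Rightarrow> bool" where
  "kpartite_kgraph k V E \<longleftrightarrow>
     (\<forall>i<k. \<forall>j<k. i \<noteq> j \<longrightarrow> V i \<inter> V j = {}) \<and>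
     (\<forall>e\<in>E. e \<subseteq> (\<Union>i<k. V i) \<and> (\<forall>i<k. card (e \<inter> V i) = 1))"

definition vdeg :: "'a set set \<Rightarrow> 'a \<Rightarrow> nat" where
  "vdeg E v = card {e \<in> E. v \<in> e}"

definition perfect_matching :: "'a set \<Rightarrow> 'a set set \<Rightarrow> 'a set set \<Rightarrow> bool" where
  "perfect_matching Vs E M \<longleftrightarrow>
     M \<subseteq> E \<and> (\<forall>e\<in>M. \<forall>f\<in>M. e \<noteq> f \<longrightarrow> e \<inter> f = {}) \<and> \<Union>M = Vs"

end

theory Submission
  imports Defs "HOL-Library.FuncSet"
begin

definition tr :: "nat \<Rightarrow> (nat \<Rightarrow> 'a set) \<Rightarrow> 'a set \<Rightarrow> bool" where
  "tr k V e \<longleftrightarrow> e \<subseteq> (\<Union>i<k. V i) \<and> (\<forall>i<k. card (e \<inter> V i) = 1)"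

definition co :: "(nat \<Rightarrow> 'a set) \<Rightarrow> 'a set \<Rightarrow> nat \<Rightarrow> 'a" where
  "co V e c = the_elem (e \<inter> V c)"

definition disjc :: "nat \<Rightarrow> (nat \<Rightarrow> 'a set) \<Rightarrow> bool" where
  "disjc k V \<longleftrightarrow> (\<forall>i<k. \<forall>j<k. i \<noteq> j \<longrightarrow> V i \<inter> V j = {})"

lemma tr_co: "tr k V e \<Longrightarrow> c < k \<Longrightarrow> e \<inter> V c = {co V e c}"
proof -
  assume "tr k V e" "c < k"
  then have "card (e \<inter> V c) = 1" unfolding tr_def by blast
  then obtain x where "e \<inter> V c = {x}" by (auto simp: card_1_singleton_iff)
  then show ?thesis unfolding co_def by simp
qed

lemma tr_co_eq: "tr k V e \<Longrightarrow> c < k \<Longrightarrow> x \<in> e \<Longrightarrow> x \<in> V c \<Longrightarrow> co V e c = x"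
proof -
  assume a: "tr k V e" "c < k" "x \<in> e" "x \<in> V c"
  then have "x \<in> e \<inter> V c" by blast
  then show ?thesis unfolding tr_co[OF a(1,2)] by simp
qed

lemma tr_co_mem: "tr k V e \<Longrightarrow> c < k \<Longrightarrow> co V e c \<in> e \<and> co V e c \<in> V c"
  using tr_co by (metis Int_iff insertI1)

lemma tr_eq_image: "tr k V e \<Longrightarrow> e = co V e ` {..<k}"
proof
  assume t: "tr k V e"
  show "e \<subseteq> co V e ` {..<k}"
  proof
    fix x assume x: "x \<in> e"
    then obtain c where c: "c < k" "x \<in> V c" using t unfolding tr_def by blast
    then have "x \<in> e \<inter> V c" using x by blast
    then have "x = co V e c" using tr_co[OF t c(1)] by blast
    then show "x \<in> co V e ` {..<k}" using c by blast
  qed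
  show "co V e ` {..<k} \<subseteq> e" using tr_co_mem[OF t] by blast
qed

lemma image_tr:
  assumes d: "disjc k V" and f: "\<And>c. c < k \<Longrightarrow> f c \<in> V c"
  shows "\<And>c. c < k \<Longrightarrow> (f ` {..<k}) \<inter> V c = {f c}"
    and "tr k V (f ` {..<k})"
    and "\<And>c. c < k \<Longrightarrow> co V (f ` {..<k}) c = f c"
proof -
  show 1: "(f ` {..<k}) \<inter> V c = {f c}" if c: "c < k" for c
  proof
    show "f ` {..<k} \<inter> V c \<subseteq> {f c}"
    proof
      fix x assume "x \<in> f ` {..<k} \<inter> V c"
      then obtain c' where c': "c' < k" "x = f c'" "x \<in> V c" by blast
      have "c' = c"
      proof (rule ccontr)
        assume "c' \<noteq> c"
        then have "V c' \<inter> V c = {}" using d c c' unfolding disjc_def by blast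
        then show False using f[OF c'(1)] c' by blast
      qed
      then show "x \<in> {f c}" using c' by simp
    qed
    show "{f c} \<subseteq> f ` {..<k} \<inter> V c" using f c by blast
  qed
  show "tr k V (f ` {..<k})" unfolding tr_def using 1 f by auto
  show "co V (f ` {..<k}) c = f c" if "c < k" for c
    using 1[OF that] unfolding co_def by simp
qed

lemma count_tr:
  assumes fw: "\<And>c. c < k \<Longrightarrow> finite (W c)"
  shows "card {e. tr k V e \<and> (\<forall>c<k. co V e c \<in> W c)} \<le> (\<Prod>c<k. card (W c))"
proof -
  let ?S = "{e. tr k V e \<and> (\<forall>c<k. co V e c \<in> W c)}"
  have "inj_on (\<lambda>e. restrict (co V e) {..<k}) ?S"
  proof (rule inj_onI)
    fix e e' assume e: "e \<in> ?S" and e': "e' \<in> ?S"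
      and eq: "restrict (co V e) {..<k} = restrict (co V e') {..<k}"
    have "e = co V e ` {..<k}" using e tr_eq_image by blast
    also have "\<dots> = co V e' ` {..<k}"
      by (rule image_cong, simp, metis eq lessThan_iff restrict_apply')
    also have "\<dots> = e'" using e' tr_eq_image by blast
    finally show "e = e'" .
  qed
  moreover have "(\<lambda>e. restrict (co V e) {..<k}) ` ?S \<subseteq> PiE {..<k} W"
  proof
    fix f assume "f \<in> (\<lambda>e. restrict (co V e) {..<k}) ` ?S"
    then obtain e where "e \<in> ?S" "f = restrict (co V e) {..<k}" by blast
    then show "f \<in> PiE {..<k} W" by auto
  qed
  moreover have "finite (PiE {..<k} W)" using fw by (intro finite_PiE) simp_all
  ultimately have "card ?S \<le> card (PiE {..<k} W)" by (rule card_inj_on_le)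
  also have "\<dots> = (\<Prod>c<k. card (W c))" by (simp add: card_PiE)
  finally show ?thesis .
qed

lemma prod_two:
  assumes "i < k" "j < k" "i \<noteq> j" "f i = a" "f j = b" "\<And>c. c < k \<Longrightarrow> c \<noteq> i \<Longrightarrow> c \<noteq> j \<Longrightarrow> f c = (m::nat)"
  shows "(\<Prod>c<k. f c) = a * b * m ^ (k - 2)"
proof -
  have "(\<Prod>c<k. f c) = f i * (\<Prod>c\<in>{..<k} - {i}. f c)"
    using assms(1) by (simp add: prod.remove)
  also have "(\<Prod>c\<in>{..<k} - {i}. f c) = f j * (\<Prod>c\<in>{..<k} - {i} - {j}. f c)"
    using assms(2,3) by (subst prod.remove[of _ j]) auto
  also have "(\<Prod>c\<in>{..<k} - {i} - {j}. f c) = (\<Prod>c\<in>{..<k} - {i} - {j}. m)"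
    using assms(6) by (intro prod.cong) auto
  also have "\<dots> = m ^ (k - 2)"
    using assms(1,2,3) by (simp add: card_Diff_singleton_if numeral_2_eq_2)
  finally show ?thesis using assms by simp
qed

lemma prod_one:
  assumes "i < k" "f i = a" "\<And>c. c < k \<Longrightarrow> c \<noteq> i \<Longrightarrow> f c = (m::nat)"
  shows "(\<Prod>c<k. f c) = a * m ^ (k - 1)"
proof -
  have "(\<Prod>c<k. f c) = f i * (\<Prod>c\<in>{..<k} - {i}. f c)"
    using assms(1) by (simp add: prod.remove)
  also have "(\<Prod>c\<in>{..<k} - {i}. f c) = (\<Prod>c\<in>{..<k} - {i}. m)"
    using assms(3) by (intro prod.cong) auto
  also have "\<dots> = m ^ (k - 1)"
    using assms(1) by simp
  finally show ?thesis using assms by simp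
qed

locale kp =
  fixes k :: nat and V :: "nat \<Rightarrow> 'a set" and E :: "'a set set" and n :: nat and d :: real
  assumes disj: "disjc k V" and edges: "\<And>e. e \<in> E \<Longrightarrow> tr k V e"
    and finV: "\<And>i. i < k \<Longrightarrow> finite (V i)" and cardV: "\<And>i. i < k \<Longrightarrow> card (V i) = n"
    and deg: "\<And>v. v \<in> (\<Union>i<k. V i) \<Longrightarrow> real (vdeg E v) \<ge> (1 - d) * real n ^ (k - 1)"
begin

definition ismatch :: "'a set set \<Rightarrow> bool" where
  "ismatch M \<longleftrightarrow> M \<subseteq> E \<and> (\<forall>e\<in>M. \<forall>f\<in>M. e \<noteq> f \<longrightarrow> e \<inter> f = {})"

lemma finU: "finite (\<Union>i<k. V i)" using finV by auto

lemma fin_tr: "finite {e. tr k V e \<and> P e}"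
proof -
  have "{e. tr k V e \<and> P e} \<subseteq> Pow (\<Union>i<k. V i)" unfolding tr_def by auto
  moreover have "finite (Pow (\<Union>i<k. V i))" using finU by simp
  ultimately show ?thesis by (rule finite_subset)
qed

lemma finE: "finite E"
proof -
  have "E \<subseteq> {e. tr k V e \<and> True}" using edges by auto
  then show ?thesis using fin_tr by (rule finite_subset)
qed

lemma match_same: "ismatch M \<Longrightarrow> e \<in> M \<Longrightarrow> e' \<in> M \<Longrightarrow> x \<in> e \<Longrightarrow> x \<in> e' \<Longrightarrow> e = e'"
  unfolding ismatch_def by blast

lemma match_tr: "ismatch M \<Longrightarrow> e \<in> M \<Longrightarrow> tr k V e"
  unfolding ismatch_def using edges by blast

lemma card_T:
  assumes j: "j < k" and v: "v \<in> V j"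
  shows "card {e. tr k V e \<and> v \<in> e} \<le> n ^ (k - 1)"
proof -
  define W where "W c = (if c = j then {v} else V c)" for c
  have sub: "{e. tr k V e \<and> v \<in> e} \<subseteq> {e. tr k V e \<and> (\<forall>c<k. co V e c \<in> W c)}"
  proof safe
    fix e c assume t: "tr k V e" and ve: "v \<in> e" and c: "c < k"
    show "co V e c \<in> W c"
    proof (cases "c = j")
      case True
      have "v \<in> e \<inter> V j" using v ve by blast
      then have "co V e j = v" unfolding tr_co[OF t j] by simp
      then show ?thesis using True by (simp add: W_def)
    next
      case False
      have "co V e c \<in> V c" using tr_co_mem[OF t c] by blast
      then show ?thesis using False by (simp add: W_def)
    qed
  qed
  have "card {e. tr k V e \<and> v \<in> e} \<le> card {e. tr k V e \<and> (\<forall>c<k. co V e c \<in> W c)}"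
    by (rule card_mono[OF fin_tr sub])
  also have "\<dots> \<le> (\<Prod>c<k. card (W c))"
    by (rule count_tr) (simp add: W_def finV)
  also have "(\<Prod>c<k. card (W c)) = 1 * n ^ (k - 1)"
    by (rule prod_one[OF j]) (auto simp: W_def cardV)
  finally show ?thesis by simp
qed

lemma nonedge:
  assumes j: "j < k" and v: "v \<in> V j"
  shows "real (card ({e. tr k V e \<and> v \<in> e} - E)) \<le> d * real n ^ (k - 1)"
proof -
  let ?T = "{e. tr k V e \<and> v \<in> e}"
  have TE: "?T \<inter> E = {e \<in> E. v \<in> e}" using edges by auto
  have "card (?T - E) = card ?T - card (?T \<inter> E)"
    by (rule card_Diff_subset_Int) (simp add: finE)
  moreover have "card (?T \<inter> E) \<le> card ?T" by (rule card_mono[OF fin_tr]) auto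
  ultimately have h1: "real (card (?T - E)) = real (card ?T) - real (vdeg E v)"
    using TE unfolding vdeg_def by simp
  have h2: "real (card ?T) \<le> real n ^ (k - 1)"
    using card_T[OF j v] by (metis of_nat_le_iff of_nat_power)
  have "real (vdeg E v) \<ge> (1 - d) * real n ^ (k - 1)"
    using deg j v by blast
  then have h3: "real (vdeg E v) \<ge> real n ^ (k - 1) - d * real n ^ (k - 1)"
    by (simp add: algebra_simps)
  show ?thesis using h1 h2 h3 by linarith
qed

lemma match_class:
  assumes m: "ismatch M" and c: "c < k"
  shows "card (\<Union>M \<inter> V c) = card M"
proof -
  have "\<Union>M \<inter> V c = (\<lambda>e. co V e c) ` M"
  proof
    show "\<Union>M \<inter> V c \<subseteq> (\<lambda>e. co V e c) ` M"
    proof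
      fix x assume "x \<in> \<Union>M \<inter> V c"
      then obtain e where e: "e \<in> M" "x \<in> e \<inter> V c" by blast
      then have "x = co V e c" using tr_co[OF match_tr[OF m e(1)] c] by blast
      then show "x \<in> (\<lambda>e. co V e c) ` M" using e by blast
    qed
    show "(\<lambda>e. co V e c) ` M \<subseteq> \<Union>M \<inter> V c"
      using tr_co_mem[OF match_tr[OF m] c] by blast
  qed
  moreover have "inj_on (\<lambda>e. co V e c) M"
  proof (rule inj_onI)
    fix e e' assume e: "e \<in> M" "e' \<in> M" "co V e c = co V e' c"
    have "co V e c \<in> e" "co V e' c \<in> e'"
      using tr_co_mem[OF match_tr[OF m e(1)] c] tr_co_mem[OF match_tr[OF m e(2)] c] by auto
    then show "e = e'" using match_same[OF m e(1,2), of "co V e c"] e(3) by simp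
  qed
  ultimately show ?thesis by (simp add: card_image)
qed

end

context kp begin

lemma aug_direct:
  assumes m: "ismatch M" and k: "0 < k" and u: "u \<in> V 0" "u \<notin> \<Union>M"
    and ineq: "real (k - 1) * real (card M) * real n ^ (k - 2) < (1 - d) * real n ^ (k - 1)"
  shows "\<exists>M'. ismatch M' \<and> card M < card M'"
proof -
  let ?Eu = "{e\<in>E. u\<in>e}"
  have "\<exists>e\<in>?Eu. e \<inter> \<Union>M = {}"
  proof (rule ccontr)
    assume "\<not> ?thesis"
    hence hit: "\<forall>e\<in>?Eu. e \<inter> \<Union>M \<noteq> {}" by blast
    define W where "W c c' = (if c' = 0 then {u} else if c' = c then \<Union>M \<inter> V c else V c')" for c c'
    define H where "H c = {e. tr k V e \<and> (\<forall>c'<k. co V e c' \<in> W c c')}" for c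
    have sub: "?Eu \<subseteq> (\<Union>c\<in>{1..<k}. H c)"
    proof
      fix e assume e: "e \<in> ?Eu"
      then have t: "tr k V e" using edges by auto
      obtain x where x: "x \<in> e" "x \<in> \<Union>M" using hit e by blast
      obtain c where c: "c < k" "x \<in> V c" using t x unfolding tr_def by blast
      have xc: "x = co V e c" using tr_co_eq[OF t c(1)] x c by simp
      have u0: "co V e 0 = u" using tr_co_eq[OF t k] u e by simp
      have c0: "c \<noteq> 0" using u0 xc x u by auto
      have "e \<in> H c"
        unfolding H_def W_def using t u0 xc x c tr_co_mem[OF t] by auto
      then show "e \<in> (\<Union>c\<in>{1..<k}. H c)" using c c0 by auto
    qed
    have cardH: "card (H c) \<le> card M * n ^ (k - 2)" if c: "c \<in> {1..<k}" for c
    proof -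
      have "card (H c) \<le> (\<Prod>c'<k. card (W c c'))"
        unfolding H_def by (rule count_tr) (auto simp: W_def finV)
      also have "\<dots> = 1 * card M * n ^ (k - 2)"
        by (rule prod_two[of 0 k c]) (use c k in \<open>auto simp: W_def cardV match_class[OF m]\<close>)
      finally show ?thesis by simp
    qed
    have "card ?Eu \<le> card (\<Union>c\<in>{1..<k}. H c)"
      by (rule card_mono[OF _ sub]) (auto simp: H_def fin_tr)
    also have "\<dots> \<le> (\<Sum>c\<in>{1..<k}. card (H c))" by (rule card_UN_le) simp
    also have "\<dots> \<le> (\<Sum>c\<in>{1..<k}. card M * n ^ (k - 2))" by (rule sum_mono) (rule cardH)
    also have "\<dots> = (k - 1) * (card M * n ^ (k - 2))" by simp
    finally have "real (vdeg E u) \<le> real ((k - 1) * (card M * n ^ (k - 2)))"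
      unfolding vdeg_def by (metis of_nat_le_iff)
    moreover have "real (vdeg E u) \<ge> (1 - d) * real n ^ (k - 1)" using deg u k by blast
    ultimately show False using ineq by (simp add: mult.assoc)
  qed
  then obtain e where e: "e \<in> E" "u \<in> e" "e \<inter> \<Union>M = {}" by blast
  have eM: "e \<notin> M" using e u by blast
  have finM: "finite M" using m finE unfolding ismatch_def by (meson finite_subset)
  have "ismatch (insert e M)" using m e unfolding ismatch_def by blast
  moreover have "card (insert e M) = Suc (card M)" using eM finM by simp
  ultimately show ?thesis by (metis lessI)
qed

end

context kp begin

definition idx :: "nat \<Rightarrow> nat \<Rightarrow> nat" where
  "idx j c = (if j \<le> c then c - j else c + k - j)"

lemma idx_range: "j < k \<Longrightarrow> c < k \<Longrightarrow> c \<noteq> j \<Longrightarrow> 1 \<le> idx j c \<and> idx j c \<le> k - 1"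
  unfolding idx_def by auto

lemma idx_inj: "j < k \<Longrightarrow> j' < k \<Longrightarrow> c < k \<Longrightarrow> idx j c = idx j' c \<Longrightarrow> j = j'"
  unfolding idx_def by (auto split: if_splits)

lemma idx_surj: assumes "j < k" "t < k - 1" shows "\<exists>c<k. c \<noteq> j \<and> idx j c = t + 1"
proof (cases "j + t + 1 < k")
  case True
  then show ?thesis unfolding idx_def by (intro exI[of _ "j + t + 1"]) auto
next
  case False
  then show ?thesis using assms unfolding idx_def by (intro exI[of _ "j + t + 1 - k"]) auto
qed

definition gf :: "'a set list \<Rightarrow> (nat \<Rightarrow> 'a) \<Rightarrow> nat \<Rightarrow> nat \<Rightarrow> 'a" where
  "gf xs u j c = (if c = j then u c else co V (xs ! (idx j c - 1)) c)"

lemma aug_list: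
  assumes m: "ismatch M" and k2: "2 \<le> k" and u: "\<And>c. c < k \<Longrightarrow> u c \<in> V c \<and> u c \<notin> \<Union>M"
    and km: "k - 1 \<le> card M"
    and ineq: "real k * (d * real n ^ (k - 1)) < real (\<Prod>{card M - (k - 1) + 1 .. card M})"
  shows "\<exists>M'. ismatch M' \<and> card M < card M'"
proof -
  define L where "L = {xs. length xs = k - 1 \<and> distinct xs \<and> set xs \<subseteq> M}"
  have finM: "finite M" using m finE unfolding ismatch_def by (meson finite_subset)
  have cardL: "card L = \<Prod>{card M - (k - 1) + 1 .. card M}"
    unfolding L_def by (rule card_lists_distinct_length_eq[OF finM km])
  have ixl: "idx j c - 1 < k - 1" "idx j c - 1 < length xs" if "xs \<in> L" "j < k" "c < k" "c \<noteq> j" for xs j c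
    using idx_range[OF that(2-4)] that(1) unfolding L_def by auto
  have gfV: "gf xs u j c \<in> V c" if xs: "xs \<in> L" and j: "j < k" and c: "c < k" for xs j c
  proof (cases "c = j")
    case True then show ?thesis using u c unfolding gf_def by simp
  next
    case False
    have "xs ! (idx j c - 1) \<in> M" using ixl[OF xs j c False] xs unfolding L_def
      by (metis nth_mem subsetD mem_Collect_eq)
    then show ?thesis using False tr_co_mem[OF match_tr[OF m] c] unfolding gf_def by simp
  qed
  have gco: "co V (gf xs u j ` {..<k}) c = gf xs u j c" if "xs \<in> L" "j < k" "c < k" for xs j c
  proof -
    have fV: "\<And>c. c < k \<Longrightarrow> gf xs u j c \<in> V c" using gfV[OF that(1,2)] .
    show ?thesis by (rule image_tr(3)[OF disj fV that(3)])
  qed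
  have gtr: "tr k V (gf xs u j ` {..<k})" if "xs \<in> L" "j < k" for xs j
  proof -
    have fV: "\<And>c. c < k \<Longrightarrow> gf xs u j c \<in> V c" using gfV[OF that(1,2)] .
    show ?thesis by (rule image_tr(2)[OF disj fV])
  qed
  have gint: "(gf xs u j ` {..<k}) \<inter> V c = {gf xs u j c}" if "xs \<in> L" "j < k" "c < k" for xs j c
  proof -
    have fV: "\<And>c. c < k \<Longrightarrow> gf xs u j c \<in> V c" using gfV[OF that(1,2)] .
    show ?thesis by (rule image_tr(1)[OF disj fV that(3)])
  qed
  have gfM: "gf xs u j c \<in> xs ! (idx j c - 1) \<and> xs ! (idx j c - 1) \<in> M \<and> xs ! (idx j c - 1) \<in> set xs"
    if xs: "xs \<in> L" and j: "j < k" and c: "c < k" and cj: "c \<noteq> j" for xs j c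
  proof -
    have mem: "xs ! (idx j c - 1) \<in> set xs" using ixl[OF xs j c cj] by simp
    then have "xs ! (idx j c - 1) \<in> M" using xs unfolding L_def by blast
    then show ?thesis using mem cj tr_co_mem[OF match_tr[OF m] c] unfolding gf_def by simp
  qed
  have ginj: "inj_on (\<lambda>xs. gf xs u j ` {..<k}) L" if j: "j < k" for j
  proof (rule inj_onI)
    fix xs ys assume xs: "xs \<in> L" and ys: "ys \<in> L" and eq: "gf xs u j ` {..<k} = gf ys u j ` {..<k}"
    show "xs = ys"
    proof (rule nth_equalityI)
      show "length xs = length ys" using xs ys unfolding L_def by simp
      fix t assume "t < length xs"
      then have t: "t < k - 1" using xs unfolding L_def by simp
      obtain c where c: "c < k" "c \<noteq> j" "idx j c = t + 1" using idx_surj[OF j t] by blast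
      have "gf xs u j c = gf ys u j c" using gco[OF xs j c(1)] gco[OF ys j c(1)] eq by metis
      moreover have "gf xs u j c \<in> xs ! t" "xs ! t \<in> M" "gf ys u j c \<in> ys ! t" "ys ! t \<in> M"
        using gfM[OF xs j c(1,2)] gfM[OF ys j c(1,2)] c(3) by auto
      ultimately show "xs ! t = ys ! t" using match_same[OF m] by metis
    qed
  qed
  define Bad where "Bad j = {xs\<in>L. gf xs u j ` {..<k} \<notin> E}" for j
  have cardBad: "real (card (Bad j)) \<le> d * real n ^ (k - 1)" if j: "j < k" for j
  proof -
    have "card (Bad j) \<le> card ({e. tr k V e \<and> u j \<in> e} - E)"
    proof (rule card_inj_on_le)
      show "inj_on (\<lambda>xs. gf xs u j ` {..<k}) (Bad j)"
        using ginj[OF j] unfolding Bad_def by (rule inj_on_subset) auto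
      show "(\<lambda>xs. gf xs u j ` {..<k}) ` Bad j \<subseteq> {e. tr k V e \<and> u j \<in> e} - E"
      proof
        fix e assume "e \<in> (\<lambda>xs. gf xs u j ` {..<k}) ` Bad j"
        then obtain xs where xs: "xs \<in> L" "e = gf xs u j ` {..<k}" "e \<notin> E" unfolding Bad_def by blast
        have "u j \<in> e" using xs(2) j unfolding gf_def by force
        then show "e \<in> {e. tr k V e \<and> u j \<in> e} - E" using gtr[OF xs(1) j] xs by blast
      qed
      show "finite ({e. tr k V e \<and> u j \<in> e} - E)" using fin_tr by blast
    qed
    then have "real (card (Bad j)) \<le> real (card ({e. tr k V e \<and> u j \<in> e} - E))" by simp
    also have "\<dots> \<le> d * real n ^ (k - 1)" using nonedge[OF j] u[OF j] by blast
    finally show ?thesis .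
  qed
  have "card (\<Union>j<k. Bad j) \<le> (\<Sum>j<k. card (Bad j))" by (rule card_UN_le) simp
  then have "real (card (\<Union>j<k. Bad j)) \<le> (\<Sum>j<k. real (card (Bad j)))"
    by (metis of_nat_le_iff of_nat_sum)
  also have "\<dots> \<le> (\<Sum>j<k. d * real n ^ (k - 1))" by (rule sum_mono) (rule cardBad; simp)
  also have "\<dots> = real k * (d * real n ^ (k - 1))" by simp
  finally have lt: "card (\<Union>j<k. Bad j) < card L" using ineq cardL by linarith
  have bsub: "(\<Union>j<k. Bad j) \<subseteq> L" unfolding Bad_def by blast
  have "\<not> L \<subseteq> (\<Union>j<k. Bad j)"
  proof
    assume "L \<subseteq> (\<Union>j<k. Bad j)"
    then have "L = (\<Union>j<k. Bad j)" using bsub by blast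
    then show False using lt by simp
  qed
  then obtain xs where xs: "xs \<in> L" "\<And>j. j < k \<Longrightarrow> xs \<notin> Bad j" by blast
  define g where "g j = gf xs u j ` {..<k}" for j
  have gE: "g j \<in> E" if "j < k" for j using xs that unfolding Bad_def g_def by blast
  have uj: "u j \<in> g j" if "j < k" for j using that unfolding g_def gf_def by force
  have gfdiff: "gf xs u j c \<noteq> gf xs u j' c" if j: "j < k" "j' < k" "c < k" "j \<noteq> j'" for j j' c
  proof (cases "c = j")
    case True
    then have "c \<noteq> j'" using j by simp
    then show ?thesis using gfM[OF xs(1) j(2,3)] u[OF j(3)] True unfolding gf_def by auto
  next
    case F1: False
    show ?thesis
    proof (cases "c = j'")
      case True
      then show ?thesis using gfM[OF xs(1) j(1,3) F1] u[OF j(3)] unfolding gf_def by auto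
    next
      case F2: False
      let ?a = "idx j c - 1" and ?b = "idx j' c - 1"
      have "idx j c \<noteq> idx j' c" using idx_inj[OF j(1,2,3)] j(4) by blast
      then have "?a \<noteq> ?b" using idx_range[OF j(1,3) F1] idx_range[OF j(2,3) F2] by arith
      moreover have "?a < length xs" "?b < length xs" using ixl xs(1) j F1 F2 by auto
      ultimately have ne: "xs ! ?a \<noteq> xs ! ?b" using xs(1) unfolding L_def by (simp add: nth_eq_iff_index_eq)
      show ?thesis
      proof
        assume "gf xs u j c = gf xs u j' c"
        then show False using gfM[OF xs(1) j(1,3) F1] gfM[OF xs(1) j(2,3) F2] match_same[OF m] ne by metis
      qed
    qed
  qed
  have gdisj: "g j \<inter> g j' = {}" if j: "j < k" "j' < k" "j \<noteq> j'" for j j'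
  proof (rule ccontr)
    assume "g j \<inter> g j' \<noteq> {}"
    then obtain x where x: "x \<in> g j" "x \<in> g j'" by blast
    then obtain c where c: "c < k" "x = gf xs u j c" unfolding g_def by blast
    have "x \<in> V c" using gfV[OF xs(1) j(1) c(1)] c by simp
    then have "x = gf xs u j' c" using gint[OF xs(1) j(2) c(1)] x unfolding g_def by blast
    then show False using c gfdiff[OF j(1,2) c(1) j(3)] by simp
  qed
  have gM: "g j \<inter> e = {}" if j: "j < k" and e: "e \<in> M" "e \<notin> set xs" for j e
  proof (rule ccontr)
    assume "g j \<inter> e \<noteq> {}"
    then obtain x where x: "x \<in> g j" "x \<in> e" by blast
    then obtain c where c: "c < k" "x = gf xs u j c" unfolding g_def by blast
    show False
    proof (cases "c = j")
      case True then show False using u[OF c(1)] c x e unfolding gf_def by auto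
    next
      case False
      then show False using gfM[OF xs(1) j c(1) False] c x e match_same[OF m] by metis
    qed
  qed
  have gnotM: "g j \<notin> M" if "j < k" for j using uj[OF that] u[OF that] by blast
  define M' where "M' = (M - set xs) \<union> g ` {..<k}"
  have "ismatch M'"
    unfolding ismatch_def M'_def
  proof (intro conjI ballI impI)
    show "M - set xs \<union> g ` {..<k} \<subseteq> E" using m gE unfolding ismatch_def by auto
    fix e f assume e: "e \<in> M - set xs \<union> g ` {..<k}" and f: "f \<in> M - set xs \<union> g ` {..<k}" and ef: "e \<noteq> f"
    show "e \<inter> f = {}"
    proof (cases "e \<in> M - set xs")
      case eM: True
      show ?thesis
      proof (cases "f \<in> M - set xs")
        case True then show ?thesis using eM ef m unfolding ismatch_def by blast
      next
        case False
        then obtain j' where j': "j' < k" "f = g j'" using f by blast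
        then show ?thesis using gM[of j' e] eM by (simp add: Int_commute)
      qed
    next
      case False
      then obtain j where j: "j < k" "e = g j" using e by blast
      show ?thesis
      proof (cases "f \<in> M - set xs")
        case True then show ?thesis using gM[of j f] j by simp
      next
        case False
        then obtain j' where j': "j' < k" "f = g j'" using f by blast
        then show ?thesis using gdisj[of j j'] j ef by auto
      qed
    qed
  qed
  moreover have "card M' = (card M - (k - 1)) + k"
  proof -
    have sx: "set xs \<subseteq> M" "card (set xs) = k - 1" using xs(1) unfolding L_def by (auto simp: distinct_card)
    have "inj_on g {..<k}"
    proof (rule inj_onI)
      fix j j' assume "j \<in> {..<k}" "j' \<in> {..<k}" "g j = g j'"
      then show "j = j'" using gdisj uj by blast
    qed
    then have cg: "card (g ` {..<k}) = k" by (simp add: card_image)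
    have "card M' = card (M - set xs) + card (g ` {..<k})"
      unfolding M'_def by (rule card_Un_disjoint) (use finM gnotM in auto)
    then show ?thesis using cg sx card_Diff_subset[OF _ sx(1)] finM
      by (metis finite_set)
  qed
  ultimately show ?thesis using km k2 by (intro exI[of _ M']) auto
qed

end

lemma arith_key:
  fixes k n m :: nat and d :: real
  assumes k2: "2 \<le> k" and dd: "d = 1 / (4 * real k) ^ k" and nk: "4 * k ^ 2 \<le> n"
    and nd: "\<not> (real (k - 1) * real m * real n ^ (k - 2) < (1 - d) * real n ^ (k - 1))"
  shows "k - 1 \<le> m \<and> real k * (d * real n ^ (k - 1)) < real (\<Prod>{m - (k - 1) + 1 .. m})"
proof -
  define K where "K = real k"
  define N where "N = real n"
  define R where "R = real m"
  have K2: "K \<ge> 2" using k2 K_def by simp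
  have NK: "N \<ge> 4 * K ^ 2" using nk unfolding N_def K_def by (metis of_nat_le_iff of_nat_mult of_nat_numeral of_nat_power)
  have Npos: "N > 0" using NK K2 by (smt (verit) zero_less_power)
  have pw: "N ^ (k - 1) = N * N ^ (k - 2)" using k2 by (metis Suc_diff_Suc Suc_1 diff_Suc_1 less_le_trans lessI numeral_2_eq_2 power_Suc le_less_trans)
  have "(1 - d) * N ^ (k - 1) \<le> (K - 1) * R * N ^ (k - 2)"
    using nd k2 unfolding N_def K_def R_def by (simp add: of_nat_diff)
  then have "((1 - d) * N) * N ^ (k - 2) \<le> ((K - 1) * R) * N ^ (k - 2)" using pw by (simp add: mult.assoc mult.commute mult.left_commute)
  then have h1: "(1 - d) * N \<le> (K - 1) * R" using Npos by (simp add: mult_le_cancel_right)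
  have "(4 * K) ^ k \<ge> 4 * K"
    using power_increasing[of 1 k "4 * K"] k2 K2 by simp
  then have dle: "d \<le> 1 / 2" using dd K2 K_def
    by (smt (verit, best) divide_le_eq_1 frac_le zero_less_power)
  have "N / 2 \<le> K * R"
  proof -
    have "d * N \<le> (1 / 2) * N" using mult_right_mono[OF dle, of N] Npos by simp
    then have "N / 2 \<le> (1 - d) * N" by (simp add: algebra_simps)
    also have "\<dots> \<le> (K - 1) * R" by (rule h1)
    also have "\<dots> \<le> K * R" using R_def by (simp add: algebra_simps)
    finally show ?thesis .
  qed
  then have KR: "2 * K * R \<ge> N" by linarith
  have low: "R - K + 2 \<ge> N / (4 * K)"
  proof -
    have "4 * K * (R - K + 2) = 2 * (2 * K * R) - 4 * K ^ 2 + 8 * K" by (simp add: algebra_simps power2_eq_square)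
    also have "\<dots> \<ge> N" using KR NK K2 by linarith
    finally have "N \<le> 4 * K * (R - K + 2)" .
    then show ?thesis using K2 by (simp add: pos_divide_le_eq mult.commute)
  qed
  have "N / (4 * K) \<ge> K" using NK K2 by (simp add: pos_le_divide_eq power2_eq_square mult.commute mult.left_commute)
  then have "R \<ge> K - 1" using low K2 by linarith
  then have "real (k - 1) \<le> real m" using k2 unfolding R_def K_def by (simp add: of_nat_diff)
  then have km: "k - 1 \<le> m" by simp
  have cardI: "card {m - (k - 1) + 1 .. m} = k - 1" using km by simp
  have "(N / (4 * K)) ^ (k - 1) = (\<Prod>x\<in>{m - (k - 1) + 1 .. m}. N / (4 * K))" using cardI by simp
  also have "\<dots> \<le> (\<Prod>x\<in>{m - (k - 1) + 1 .. m}. real x)"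
  proof (rule prod_mono)
    fix x assume x: "x \<in> {m - (k - 1) + 1 .. m}"
    then have "m + 2 \<le> x + k" by auto
    then have "real (m + 2) \<le> real (x + k)" by (simp only: of_nat_le_iff)
    then have "real x \<ge> R - K + 2" unfolding R_def K_def by simp
    then show "0 \<le> N / (4 * K) \<and> N / (4 * K) \<le> real x" using low Npos K2 by simp
  qed
  also have "\<dots> = real (\<Prod>{m - (k - 1) + 1 .. m})" by (simp add: of_nat_prod)
  finally have P: "(N / (4 * K)) ^ (k - 1) \<le> real (\<Prod>{m - (k - 1) + 1 .. m})" .
  have pk: "(4 * K) ^ k = 4 * K * (4 * K) ^ (k - 1)" using k2 by (metis Suc_diff_1 less_le_trans pos2 power_Suc)
  have Qpos: "(4 * K) ^ (k - 1) > 0" using K2 by simp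
  have NPpos: "N ^ (k - 1) > 0" using Npos by simp
  have "K * (d * N ^ (k - 1)) = N ^ (k - 1) / (4 * (4 * K) ^ (k - 1))"
    using dd pk K2 unfolding K_def by (simp add: field_simps)
  also have "\<dots> < N ^ (k - 1) / (4 * K) ^ (k - 1)"
  proof -
    have gen: "\<And>a q::real. a > 0 \<Longrightarrow> q > 0 \<Longrightarrow> a / (4 * q) < a / q"
      by (simp add: divide_strict_left_mono)
    show ?thesis by (rule gen[OF NPpos Qpos])
  qed
  also have "\<dots> = (N / (4 * K)) ^ (k - 1)" by (simp add: power_divide)
  finally show ?thesis using P km unfolding K_def N_def by linarith
qed

context kp begin

lemma perfect:
  assumes k0: "0 < k" and dd: "d = 1 / (4 * real k) ^ k" and nk: "4 * k ^ 2 \<le> n"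
  shows "\<exists>M. perfect_matching (\<Union>i<k. V i) E M"
proof -
  have "\<exists>M. ismatch M \<and> (\<forall>M'. ismatch M' \<longrightarrow> card M' \<le> card M)"
  proof (rule ex_has_greatest_nat[where P = ismatch and f = card and k = "{}" and b = "card E + 1"])
    show "ismatch {}" unfolding ismatch_def by simp
    show "\<forall>y. ismatch y \<longrightarrow> card y < card E + 1"
      using finE unfolding ismatch_def by (metis card_mono less_Suc_eq_le Suc_eq_plus1)
  qed
  then obtain M where m: "ismatch M" and mx: "\<And>M'. ismatch M' \<Longrightarrow> card M' \<le> card M" by blast
  have finM: "finite M" using m finE unfolding ismatch_def by (meson finite_subset)
  have "\<Union>M = (\<Union>i<k. V i)"
  proof
    show "\<Union>M \<subseteq> (\<Union>i<k. V i)" using m edges unfolding ismatch_def tr_def by blast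
    show "(\<Union>i<k. V i) \<subseteq> \<Union>M"
    proof (rule ccontr)
      assume "\<not> (\<Union>i<k. V i) \<subseteq> \<Union>M"
      then obtain w c1 where w: "c1 < k" "w \<in> V c1" "w \<notin> \<Union>M" by blast
      have "\<Union>M \<inter> V c1 \<subset> V c1" using w by blast
      then have "card (\<Union>M \<inter> V c1) < card (V c1)" using finV[OF w(1)] by (rule psubset_card_mono[rotated])
      then have mn: "card M < n" using match_class[OF m w(1)] cardV[OF w(1)] by simp
      have "\<forall>c. \<exists>x. c < k \<longrightarrow> x \<in> V c \<and> x \<notin> \<Union>M"
      proof
        fix c show "\<exists>x. c < k \<longrightarrow> x \<in> V c \<and> x \<notin> \<Union>M"
        proof (cases "c < k")
          case True
          have "\<not> V c \<subseteq> \<Union>M \<inter> V c"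
          proof
            assume "V c \<subseteq> \<Union>M \<inter> V c"
            then have "card (V c) \<le> card (\<Union>M \<inter> V c)" using finV[OF True] by (intro card_mono) auto
            then show False using match_class[OF m True] cardV[OF True] mn by simp
          qed
          then show ?thesis by blast
        qed simp
      qed
      then obtain u where u: "\<And>c. c < k \<Longrightarrow> u c \<in> V c \<and> u c \<notin> \<Union>M" by metis
      have "\<exists>M'. ismatch M' \<and> card M < card M'"
      proof (cases "real (k - 1) * real (card M) * real n ^ (k - 2) < (1 - d) * real n ^ (k - 1)")
        case True
        show ?thesis by (rule aug_direct[OF m k0 _ _ True]) (use u[OF k0] in auto)
      next
        case False
        have k2: "2 \<le> k"
        proof (rule ccontr)
          assume "\<not> 2 \<le> k"
          then have "k = 1" using k0 by simp
          then show False using False dd by simp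
        qed
        have ak: "k - 1 \<le> card M \<and> real k * (d * real n ^ (k - 1)) < real (\<Prod>{card M - (k - 1) + 1 .. card M})"
          by (rule arith_key[OF k2 dd nk False])
        show ?thesis by (rule aug_list[OF m k2 u]) (use ak in auto)
      qed
      then show False using mx by (meson not_le)
    qed
  qed
  then show ?thesis using m unfolding perfect_matching_def ismatch_def by blast
qed

end

theorem lemma8p18:
  shows "\<forall>k::nat. k > 0 \<longrightarrow> (\<exists>d::real. d > 0 \<and> (\<exists>n0::nat. \<forall>n\<ge>n0.
     \<forall>(V :: nat \<Rightarrow> nat set) (E :: nat set set).
       kpartite_kgraph k V E \<and> (\<forall>i<k. finite (V i) \<and> card (V i) = n) \<and>
       (\<forall>v\<in>(\<Union>i<k. V i). real (vdeg E v) \<ge> (1 - d) * real n ^ (k - 1))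
       \<longrightarrow> (\<exists>M. perfect_matching (\<Union>i<k. V i) E M)))"
proof (intro allI impI)
  fix k :: nat assume k0: "k > 0"
  define d :: real where "d = 1 / (4 * real k) ^ k"
  show "\<exists>d::real. d > 0 \<and> (\<exists>n0::nat. \<forall>n\<ge>n0.
     \<forall>(V :: nat \<Rightarrow> nat set) (E :: nat set set).
       kpartite_kgraph k V E \<and> (\<forall>i<k. finite (V i) \<and> card (V i) = n) \<and>
       (\<forall>v\<in>(\<Union>i<k. V i). real (vdeg E v) \<ge> (1 - d) * real n ^ (k - 1))
       \<longrightarrow> (\<exists>M. perfect_matching (\<Union>i<k. V i) E M))"
  proof (rule exI[of _ d], rule conjI)
    show "d > 0" unfolding d_def using k0 by simp
    show "\<exists>n0::nat. \<forall>n\<ge>n0.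
     \<forall>(V :: nat \<Rightarrow> nat set) (E :: nat set set).
       kpartite_kgraph k V E \<and> (\<forall>i<k. finite (V i) \<and> card (V i) = n) \<and>
       (\<forall>v\<in>(\<Union>i<k. V i). real (vdeg E v) \<ge> (1 - d) * real n ^ (k - 1))
       \<longrightarrow> (\<exists>M. perfect_matching (\<Union>i<k. V i) E M)"
  proof (rule exI[of _ "4 * k ^ 2"], intro allI impI)
    fix n :: nat and V :: "nat \<Rightarrow> nat set" and E :: "nat set set"
    assume n: "4 * k ^ 2 \<le> n"
    assume h: "kpartite_kgraph k V E \<and> (\<forall>i<k. finite (V i) \<and> card (V i) = n) \<and>
       (\<forall>v\<in>(\<Union>i<k. V i). real (vdeg E v) \<ge> (1 - d) * real n ^ (k - 1))"
    interpret kp k V E n d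
    proof
      have kg: "kpartite_kgraph k V E" using h by (rule conjunct1)
      show "disjc k V" using kg unfolding kpartite_kgraph_def disjc_def by (rule conjunct1)
      show "tr k V e" if "e \<in> E" for e
        using kg that unfolding kpartite_kgraph_def tr_def by simp
      show "finite (V i)" if "i < k" for i using h that by simp
      show "card (V i) = n" if "i < k" for i using h that by simp
      show "(1 - d) * real n ^ (k - 1) \<le> real (vdeg E v)" if "v \<in> (\<Union>i<k. V i)" for v
      proof -
        have "\<forall>v\<in>(\<Union>i<k. V i). real (vdeg E v) \<ge> (1 - d) * real n ^ (k - 1)" using h by (elim conjE)
        then show ?thesis using that by (rule bspec)
      qed
    qed
    show "\<exists>M. perfect_matching (\<Union>i<k. V i) E M" by (rule perfect[OF k0 d_def n])
  qed
  qed
qed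


end
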